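(* Let $G$ and $H$ be nontrivial finite connected simple graphs and let $\ell\geq 1$ be an integer. (1) If $S$ is an $\ell$-solid-resolving set of $G\Box H$, then the projection of $S$ onto $G$ is an $\ell$-solid-resolving set of $G$, and the projection of $S$ onto $H$ is an $\ell$-solid-resolving set of $H$. (2) If $T$ is an $\ell$-solid-resolving set of $G$ and $U$ is an $\ell$-solid-resolving set of $H$, then $T\times U=\{tu: t\in T,u\in U\}$ is an $\ell$-solid-resolving set of $G\Box H$. (3) $\max\{\beta_\ell^s(G),\beta_\ell^s(H)\}\leq \beta_\ell^s(G\Box H)\leq \beta_\ell^s(G)\cdot\beta_\ell^s(H)$.
   Context: The Cartesian product $G\Box H$ has vertex set $\{av: a\in V(G), v\in V(H)\}$, with distinct $av,bu$ adjacent iff ($a=b$ and $uv\in E(H)$) or ($ab\in E(G)$ and $u=v$). The projection of $X\subseteq V(G\Box H)$ onto $G$ is $\{x_1: x_1x_2\in X\}$, and onto $H$ is $\{x_2: x_1x_2\in X\}$. For a graph, $d$ is the shortest-path distance, $d(s,X)=\min_{x\in X}d(s,x)$ for nonempty $X$, and $\mathcal{D}_S(X)=(d(s_1,X),\dots,d(s_k,X))$ for $S=\{s_1,\dots,s_k\}$. $S$ is an $\ell$-solid-resolving set if $\mathcal{D}_S(X)\neq\mathcal{D}_S(Y)$ for all distinct nonempty vertex sets $X,Y$ with $|X|\leq\ell$ ($Y$ arbitrary); $\beta_\ell^s$ is the minimum size of such a set. *)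

theory Defs
  imports Main
begin

definition simple_graph :: "'a set \<Rightarrow> ('a \<Rightarrow> 'a \<Rightarrow> bool) \<Rightarrow> bool" where
  "simple_graph V E \<longleftrightarrow> finite V \<and> (\<forall>x y. E x y \<longrightarrow> x \<in> V \<and> y \<in> V)
     \<and> (\<forall>x y. E x y \<longrightarrow> E y x) \<and> (\<forall>x. \<not> E x x)"

fun walk :: "('a \<Rightarrow> 'a \<Rightarrow> bool) \<Rightarrow> nat \<Rightarrow> 'a \<Rightarrow> 'a \<Rightarrow> bool" where
  "walk E 0 x y \<longleftrightarrow> x = y"
| "walk E (Suc n) x y \<longleftrightarrow> (\<exists>z. E x z \<and> walk E n z y)"

definition connected_graph :: "'a set \<Rightarrow> ('a \<Rightarrow> 'a \<Rightarrow> bool) \<Rightarrow> bool" where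
  "connected_graph V E \<longleftrightarrow> V \<noteq> {} \<and> (\<forall>x\<in>V. \<forall>y\<in>V. \<exists>n. walk E n x y)"

definition gdist :: "('a \<Rightarrow> 'a \<Rightarrow> bool) \<Rightarrow> 'a \<Rightarrow> 'a \<Rightarrow> nat" where
  "gdist E x y = (LEAST n. walk E n x y)"

definition setdist :: "('a \<Rightarrow> 'a \<Rightarrow> bool) \<Rightarrow> 'a \<Rightarrow> 'a set \<Rightarrow> nat" where
  "setdist E s X = Min (gdist E s ` X)"

definition solid_resolving :: "nat \<Rightarrow> 'a set \<Rightarrow> ('a \<Rightarrow> 'a \<Rightarrow> bool) \<Rightarrow> 'a set \<Rightarrow> bool" where
  "solid_resolving l V E S \<longleftrightarrow> S \<subseteq> V \<and>
     (\<forall>X Y. X \<subseteq> V \<and> Y \<subseteq> V \<and> X \<noteq> {} \<and> Y \<noteq> {} \<and> X \<noteq> Y \<and> card X \<le> l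
        \<longrightarrow> (\<exists>s\<in>S. setdist E s X \<noteq> setdist E s Y))"

definition solid_dim :: "nat \<Rightarrow> 'a set \<Rightarrow> ('a \<Rightarrow> 'a \<Rightarrow> bool) \<Rightarrow> nat" where
  "solid_dim l V E = (LEAST k. \<exists>S. solid_resolving l V E S \<and> card S = k)"

definition cart_edge :: "('a \<Rightarrow> 'a \<Rightarrow> bool) \<Rightarrow> ('b \<Rightarrow> 'b \<Rightarrow> bool) \<Rightarrow> ('a \<times> 'b) \<Rightarrow> ('a \<times> 'b) \<Rightarrow> bool" where
  "cart_edge EG EH p q \<longleftrightarrow> p \<noteq> q \<and>
     ((fst p = fst q \<and> EH (snd p) (snd q)) \<or> (EG (fst p) (fst q) \<and> snd p = snd q))"

end

theory Submission
  imports Defs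
begin

lemma char_gen:
  fixes f :: "'s \<Rightarrow> 'v \<Rightarrow> nat"
  assumes fin: "finite V"
  shows "(\<forall>X Y. X \<subseteq> V \<and> Y \<subseteq> V \<and> X \<noteq> {} \<and> Y \<noteq> {} \<and> X \<noteq> Y \<and> card X \<le> l
        \<longrightarrow> (\<exists>s\<in>S. Min (f s ` X) \<noteq> Min (f s ` Y)))
   \<longleftrightarrow> (\<forall>X x. X \<subseteq> V \<and> X \<noteq> {} \<and> card X \<le> l \<and> x \<in> V \<and> x \<notin> X
        \<longrightarrow> (\<exists>s\<in>S. \<forall>y\<in>X. f s x < f s y))" (is "?L \<longleftrightarrow> ?R")
proof
  assume H: ?L
  show ?R
  proof (intro allI impI)
    fix X x assume a: "X \<subseteq> V \<and> X \<noteq> {} \<and> card X \<le> l \<and> x \<in> V \<and> x \<notin> X"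
    have fX: "finite X" using a fin finite_subset by blast
    have ne: "X \<noteq> insert x X" using a by blast
    have "insert x X \<subseteq> V" using a by simp
    then have "\<exists>s\<in>S. Min (f s ` X) \<noteq> Min (f s ` insert x X)"
      using a ne by (intro H[rule_format]) auto
    then obtain s where s: "s \<in> S" "Min (f s ` X) \<noteq> Min (f s ` insert x X)" by blast
    have "Min (f s ` insert x X) = min (f s x) (Min (f s ` X))"
      using fX a by simp
    then have "f s x < Min (f s ` X)" using s by linarith
    then have "\<forall>y\<in>X. f s x < f s y" using fX a by simp
    then show "\<exists>s\<in>S. \<forall>y\<in>X. f s x < f s y" using s by blast
  qed
next
  assume H: ?R
  show ?L
  proof (intro allI impI)
    fix X Y assume a: "X \<subseteq> V \<and> Y \<subseteq> V \<and> X \<noteq> {} \<and> Y \<noteq> {} \<and> X \<noteq> Y \<and> card X \<le> l"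
    have fX: "finite X" using a fin finite_subset by blast
    have fY: "finite Y" using a fin finite_subset by blast
    show "\<exists>s\<in>S. Min (f s ` X) \<noteq> Min (f s ` Y)"
    proof (cases "Y \<subseteq> X")
      case False
      then obtain y where y: "y \<in> Y" "y \<notin> X" by blast
      have "y \<in> V" using a y by blast
      then have "\<exists>s\<in>S. \<forall>x\<in>X. f s y < f s x" using a y by (intro H[rule_format]) auto
      then obtain s where s: "s \<in> S" "\<forall>x\<in>X. f s y < f s x" by blast
      have "f s y < Min (f s ` X)" using s fX a by simp
      moreover have "Min (f s ` Y) \<le> f s y" using fY y by simp
      ultimately have "Min (f s ` X) \<noteq> Min (f s ` Y)" by linarith
      then show ?thesis using s by blast
    next
      case True
      then obtain x where x: "x \<in> X" "x \<notin> Y" using a by blast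
      have "x \<in> V" using a x by blast
      have "card Y \<le> l" using card_mono[OF fX True] a by linarith
      then have "\<exists>s\<in>S. \<forall>y\<in>Y. f s x < f s y" using a x \<open>x \<in> V\<close> by (intro H[rule_format]) auto
      then obtain s where s: "s \<in> S" "\<forall>y\<in>Y. f s x < f s y" by blast
      have "f s x < Min (f s ` Y)" using s fY a by simp
      moreover have "Min (f s ` X) \<le> f s x" using fX x by simp
      ultimately have "Min (f s ` X) \<noteq> Min (f s ` Y)" by linarith
      then show ?thesis using s by blast
    qed
  qed
qed

lemma char:
  assumes "finite V"
  shows "solid_resolving l V E S \<longleftrightarrow> S \<subseteq> V \<and>
    (\<forall>X x. X \<subseteq> V \<and> X \<noteq> {} \<and> card X \<le> l \<and> x \<in> V \<and> x \<notin> X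
        \<longrightarrow> (\<exists>s\<in>S. \<forall>y\<in>X. gdist E s x < gdist E s y))"
  unfolding solid_resolving_def setdist_def using char_gen[OF assms, of l S "gdist E"] by simp

lemma walk_split:
  "walk (cart_edge EG EH) n p q \<Longrightarrow> \<exists>n1 n2. n1 + n2 = n \<and> walk EG n1 (fst p) (fst q) \<and> walk EH n2 (snd p) (snd q)"
proof (induction n arbitrary: p)
  case 0
  then show ?case by auto
next
  case (Suc n)
  then obtain z where z: "cart_edge EG EH p z" "walk (cart_edge EG EH) n z q" by auto
  then obtain n1 n2 where n: "n1 + n2 = n" "walk EG n1 (fst z) (fst q)" "walk EH n2 (snd z) (snd q)"
    using Suc.IH by blast
  show ?case
  proof (cases "fst p = fst z \<and> EH (snd p) (snd z)")
    case True
    then show ?thesis using n by (intro exI[of _ n1] exI[of _ "Suc n2"]) auto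
  next
    case False
    then have "EG (fst p) (fst z) \<and> snd p = snd z" using z unfolding cart_edge_def by blast
    then show ?thesis using n by (intro exI[of _ "Suc n1"] exI[of _ n2]) auto
  qed
qed

lemma walk_append: "walk E m x y \<Longrightarrow> walk E n y z \<Longrightarrow> walk E (m + n) x z"
  by (induction m arbitrary: x) auto

lemma walk_lift1: "(\<forall>x. \<not> EG x x) \<Longrightarrow> walk EG n a c \<Longrightarrow> walk (cart_edge EG EH) n (a, b) (c, b)"
proof (induction n arbitrary: a)
  case 0 then show ?case by simp
next
  case (Suc n)
  then obtain z where z: "EG a z" "walk EG n z c" by auto
  have "cart_edge EG EH (a, b) (z, b)" using z Suc.prems unfolding cart_edge_def by auto
  then show ?case using Suc z by auto
qed

lemma walk_lift2: "(\<forall>x. \<not> EH x x) \<Longrightarrow> walk EH n b d \<Longrightarrow> walk (cart_edge EG EH) n (a, b) (a, d)"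
proof (induction n arbitrary: b)
  case 0 then show ?case by simp
next
  case (Suc n)
  then obtain z where z: "EH b z" "walk EH n z d" by auto
  have "cart_edge EG EH (a, b) (a, z)" using z Suc.prems unfolding cart_edge_def by auto
  then show ?case using Suc z by auto
qed

lemma gdist_walk:
  assumes "connected_graph V E" "x \<in> V" "y \<in> V"
  shows "walk E (gdist E x y) x y"
  using assms unfolding connected_graph_def gdist_def by (meson LeastI)

lemma gdist_pos:
  assumes "connected_graph V E" "x \<in> V" "y \<in> V" "x \<noteq> y"
  shows "gdist E x y > 0"
  using gdist_walk[OF assms(1-3)] assms(4) by (cases "gdist E x y") auto

lemma gdist_self: "gdist E x x = 0"
  unfolding gdist_def by simp

lemma gdist_prod:
  assumes sg: "simple_graph VG EG" and cg: "connected_graph VG EG"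
    and sh: "simple_graph VH EH" and ch: "connected_graph VH EH"
    and a: "a \<in> VG" "c \<in> VG" and b: "b \<in> VH" "d \<in> VH"
  shows "gdist (cart_edge EG EH) (a, b) (c, d) = gdist EG a c + gdist EH b d"
proof -
  have irG: "\<forall>x. \<not> EG x x" using sg unfolding simple_graph_def by blast
  have irH: "\<forall>x. \<not> EH x x" using sh unfolding simple_graph_def by blast
  have w1: "walk (cart_edge EG EH) (gdist EG a c) (a, b) (c, b)"
    by (rule walk_lift1[OF irG gdist_walk[OF cg a]])
  have w2: "walk (cart_edge EG EH) (gdist EH b d) (c, b) (c, d)"
    by (rule walk_lift2[OF irH gdist_walk[OF ch b]])
  have w: "walk (cart_edge EG EH) (gdist EG a c + gdist EH b d) (a, b) (c, d)"
    using walk_append[OF w1 w2] .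
  show ?thesis unfolding gdist_def[of "cart_edge EG EH"]
  proof (rule Least_equality)
    show "walk (cart_edge EG EH) (gdist EG a c + gdist EH b d) (a, b) (c, d)" by (rule w)
  next
    fix n assume "walk (cart_edge EG EH) n (a, b) (c, d)"
    from walk_split[OF this] obtain n1 n2 where n: "n1 + n2 = n" "walk EG n1 a c" "walk EH n2 b d"
      by auto
    have "gdist EG a c \<le> n1" unfolding gdist_def using n by (simp add: Least_le)
    moreover have "gdist EH b d \<le> n2" unfolding gdist_def using n by (simp add: Least_le)
    ultimately show "gdist EG a c + gdist EH b d \<le> n" using n by linarith
  qed
qed

lemma all_resolving:
  assumes "finite V" "connected_graph V E"
  shows "solid_resolving l V E V"
  unfolding char[OF assms(1)]
proof (intro conjI allI impI)
  fix X x assume a: "X \<subseteq> V \<and> X \<noteq> {} \<and> card X \<le> l \<and> x \<in> V \<and> x \<notin> X"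
  have "\<forall>y\<in>X. gdist E x x < gdist E x y"
  proof
    fix y assume y: "y \<in> X"
    then have "y \<in> V" "y \<noteq> x" using a by auto
    then have "gdist E x y > 0" using gdist_pos[OF assms(2)] a by blast
    then show "gdist E x x < gdist E x y" by (simp add: gdist_self)
  qed
  then show "\<exists>s\<in>V. \<forall>y\<in>X. gdist E s x < gdist E s y" using a by blast
qed simp

lemma dim_witness:
  assumes "solid_resolving l V E S"
  shows "\<exists>S0. solid_resolving l V E S0 \<and> card S0 = solid_dim l V E"
  unfolding solid_dim_def by (rule LeastI_ex) (use assms in blast)

lemma dim_le:
  assumes "solid_resolving l V E S"
  shows "solid_dim l V E \<le> card S"
  unfolding solid_dim_def by (rule Least_le) (use assms in blast)

theorem mainTheorem8:
  fixes VG :: "'a set" and EG :: "'a \<Rightarrow> 'a \<Rightarrow> bool"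
    and VH :: "'b set" and EH :: "'b \<Rightarrow> 'b \<Rightarrow> bool"
    and l :: nat
  assumes "simple_graph VG EG" "connected_graph VG EG" "card VG \<ge> 2"
    and "simple_graph VH EH" "connected_graph VH EH" "card VH \<ge> 2"
    and "l \<ge> 1"
  shows "(\<forall>S. solid_resolving l (VG \<times> VH) (cart_edge EG EH) S \<longrightarrow>
            solid_resolving l VG EG (fst ` S) \<and> solid_resolving l VH EH (snd ` S))
       \<and> (\<forall>T U. solid_resolving l VG EG T \<and> solid_resolving l VH EH U \<longrightarrow>
            solid_resolving l (VG \<times> VH) (cart_edge EG EH) (T \<times> U))
       \<and> max (solid_dim l VG EG) (solid_dim l VH EH) \<le> solid_dim l (VG \<times> VH) (cart_edge EG EH)
       \<and> solid_dim l (VG \<times> VH) (cart_edge EG EH) \<le> solid_dim l VG EG * solid_dim l VH EH"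
proof -
  note sg = assms(1) and cg = assms(2) and sh = assms(4) and ch = assms(5)
  have fG: "finite VG" using sg unfolding simple_graph_def by blast
  have fH: "finite VH" using sh unfolding simple_graph_def by blast
  have fP: "finite (VG \<times> VH)" using fG fH by simp
  have neG: "VG \<noteq> {}" using cg unfolding connected_graph_def by blast
  have neH: "VH \<noteq> {}" using ch unfolding connected_graph_def by blast
  have gd: "\<And>p q. p \<in> VG \<times> VH \<Longrightarrow> q \<in> VG \<times> VH \<Longrightarrow>
     gdist (cart_edge EG EH) p q = gdist EG (fst p) (fst q) + gdist EH (snd p) (snd q)"
    using gdist_prod[OF sg cg sh ch] by (metis mem_Times_iff prod.collapse)
  have P1: "solid_resolving l VG EG (fst ` S) \<and> solid_resolving l VH EH (snd ` S)"
    if S: "solid_resolving l (VG \<times> VH) (cart_edge EG EH) S" for S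
  proof -
    have SS: "S \<subseteq> VG \<times> VH" and R: "\<And>X x. X \<subseteq> VG \<times> VH \<Longrightarrow> X \<noteq> {} \<Longrightarrow> card X \<le> l \<Longrightarrow> x \<in> VG \<times> VH \<Longrightarrow> x \<notin> X
        \<Longrightarrow> (\<exists>s\<in>S. \<forall>y\<in>X. gdist (cart_edge EG EH) s x < gdist (cart_edge EG EH) s y)"
      using S unfolding char[OF fP] by blast+
    obtain v where v: "v \<in> VH" using neH by blast
    obtain u where u: "u \<in> VG" using neG by blast
    have A: "solid_resolving l VG EG (fst ` S)"
      unfolding char[OF fG]
    proof (intro conjI allI impI)
      show "fst ` S \<subseteq> VG" using SS by auto
      fix X x assume a: "X \<subseteq> VG \<and> X \<noteq> {} \<and> card X \<le> l \<and> x \<in> VG \<and> x \<notin> X"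
      have c: "card (X \<times> {v}) = card X" by (simp add: card_cartesian_product)
      obtain s where s: "s \<in> S" "\<forall>y\<in>X \<times> {v}. gdist (cart_edge EG EH) s (x, v) < gdist (cart_edge EG EH) s y"
      proof -
        have "\<exists>s\<in>S. \<forall>y\<in>X \<times> {v}. gdist (cart_edge EG EH) s (x, v) < gdist (cart_edge EG EH) s y"
          by (rule R) (use a v c in auto)
        then show ?thesis using that by blast
      qed
      have "\<forall>y\<in>X. gdist EG (fst s) x < gdist EG (fst s) y"
      proof
        fix y assume y: "y \<in> X"
        have "gdist (cart_edge EG EH) s (x, v) < gdist (cart_edge EG EH) s (y, v)" using s y by blast
        moreover have "s \<in> VG \<times> VH" using s SS by blast
        ultimately show "gdist EG (fst s) x < gdist EG (fst s) y"
          using gd[of s "(x, v)"] gd[of s "(y, v)"] a v y by auto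
      qed
      then show "\<exists>t\<in>fst ` S. \<forall>y\<in>X. gdist EG t x < gdist EG t y" using s by blast
    qed
    have B: "solid_resolving l VH EH (snd ` S)"
      unfolding char[OF fH]
    proof (intro conjI allI impI)
      show "snd ` S \<subseteq> VH" using SS by auto
      fix X x assume a: "X \<subseteq> VH \<and> X \<noteq> {} \<and> card X \<le> l \<and> x \<in> VH \<and> x \<notin> X"
      have c: "card ({u} \<times> X) = card X" by (simp add: card_cartesian_product)
      obtain s where s: "s \<in> S" "\<forall>y\<in>{u} \<times> X. gdist (cart_edge EG EH) s (u, x) < gdist (cart_edge EG EH) s y"
      proof -
        have "\<exists>s\<in>S. \<forall>y\<in>{u} \<times> X. gdist (cart_edge EG EH) s (u, x) < gdist (cart_edge EG EH) s y"
          by (rule R) (use a u c in auto)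
        then show ?thesis using that by blast
      qed
      have "\<forall>y\<in>X. gdist EH (snd s) x < gdist EH (snd s) y"
      proof
        fix y assume y: "y \<in> X"
        have "gdist (cart_edge EG EH) s (u, x) < gdist (cart_edge EG EH) s (u, y)" using s y by blast
        moreover have "s \<in> VG \<times> VH" using s SS by blast
        ultimately show "gdist EH (snd s) x < gdist EH (snd s) y"
          using gd[of s "(u, x)"] gd[of s "(u, y)"] a u y by auto
      qed
      then show "\<exists>t\<in>snd ` S. \<forall>y\<in>X. gdist EH t x < gdist EH t y" using s by blast
    qed
    show ?thesis using A B by blast
  qed
  have P2: "solid_resolving l (VG \<times> VH) (cart_edge EG EH) (T \<times> U)"
    if TU: "solid_resolving l VG EG T" "solid_resolving l VH EH U" for T U
  proof -
    have TS: "T \<subseteq> VG" and RT: "\<And>X x. X \<subseteq> VG \<Longrightarrow> X \<noteq> {} \<Longrightarrow> card X \<le> l \<Longrightarrow> x \<in> VG \<Longrightarrow> x \<notin> X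
        \<Longrightarrow> (\<exists>s\<in>T. \<forall>y\<in>X. gdist EG s x < gdist EG s y)"
      using TU(1) unfolding char[OF fG] by blast+
    have US: "U \<subseteq> VH" and RU: "\<And>X x. X \<subseteq> VH \<Longrightarrow> X \<noteq> {} \<Longrightarrow> card X \<le> l \<Longrightarrow> x \<in> VH \<Longrightarrow> x \<notin> X
        \<Longrightarrow> (\<exists>s\<in>U. \<forall>y\<in>X. gdist EH s x < gdist EH s y)"
      using TU(2) unfolding char[OF fH] by blast+
    have neT: "T \<noteq> {}"
    proof -
      obtain x where "x \<in> VG" using neG by blast
      have "{x} \<noteq> VG"
      proof
        assume "{x} = VG" then have "card VG = 1" by auto
        then show False using assms(3) by simp
      qed
      then obtain y where "y \<in> VG" "y \<noteq> x" using \<open>x \<in> VG\<close> by blast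
      then show ?thesis using RT[of "{y}" x] assms(7) \<open>x \<in> VG\<close> by auto
    qed
    have neU: "U \<noteq> {}"
    proof -
      obtain x where "x \<in> VH" using neH by blast
      have "{x} \<noteq> VH"
      proof
        assume "{x} = VH" then have "card VH = 1" by auto
        then show False using assms(6) by simp
      qed
      then obtain y where "y \<in> VH" "y \<noteq> x" using \<open>x \<in> VH\<close> by blast
      then show ?thesis using RU[of "{y}" x] assms(7) \<open>x \<in> VH\<close> by auto
    qed
    show ?thesis
      unfolding char[OF fP]
    proof (intro conjI allI impI)
      show "T \<times> U \<subseteq> VG \<times> VH" using TS US by auto
      fix X p assume a: "X \<subseteq> VG \<times> VH \<and> X \<noteq> {} \<and> card X \<le> l \<and> p \<in> VG \<times> VH \<and> p \<notin> X"
      obtain pa pb where p: "p = (pa, pb)" by fastforce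
      have fX: "finite X" using a fP finite_subset by blast
      define A where "A = fst ` X - {pa}"
      define B where "B = snd ` X - {pb}"
      have cA: "card A \<le> l"
      proof -
        have "card (fst ` X - {pa}) \<le> card (fst ` X)" by (rule card_mono) (auto simp: fX)
        also have "\<dots> \<le> card X" by (rule card_image_le[OF fX])
        finally show ?thesis unfolding A_def using a by linarith
      qed
      have cB: "card B \<le> l"
      proof -
        have "card (snd ` X - {pb}) \<le> card (snd ` X)" by (rule card_mono) (auto simp: fX)
        also have "\<dots> \<le> card X" by (rule card_image_le[OF fX])
        finally show ?thesis unfolding B_def using a by linarith
      qed
      obtain t where t: "t \<in> T" "\<forall>y\<in>A. gdist EG t pa < gdist EG t y"
      proof (cases "A = {}")
        case True then show ?thesis using that neT by blast
      next
        case False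
        have "A \<subseteq> VG" "pa \<in> VG" "pa \<notin> A" using a p unfolding A_def by auto
        then show ?thesis using RT[of A pa] False cA that by blast
      qed
      obtain u where u: "u \<in> U" "\<forall>y\<in>B. gdist EH u pb < gdist EH u y"
      proof (cases "B = {}")
        case True then show ?thesis using that neU by blast
      next
        case False
        have "B \<subseteq> VH" "pb \<in> VH" "pb \<notin> B" using a p unfolding B_def by auto
        then show ?thesis using RU[of B pb] False cB that by blast
      qed
      have "\<forall>y\<in>X. gdist (cart_edge EG EH) (t, u) p < gdist (cart_edge EG EH) (t, u) y"
      proof
        fix y assume y: "y \<in> X"
        obtain ya yb where yy: "y = (ya, yb)" by fastforce
        have tu: "(t, u) \<in> VG \<times> VH" using t u TS US by auto
        have yV: "y \<in> VG \<times> VH" using a y by blast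
        have e1: "gdist (cart_edge EG EH) (t, u) p = gdist EG t pa + gdist EH u pb"
          using gd[OF tu] a p by auto
        have e2: "gdist (cart_edge EG EH) (t, u) y = gdist EG t ya + gdist EH u yb"
          using gd[OF tu yV] yy by auto
        have h1: "ya \<noteq> pa \<Longrightarrow> gdist EG t pa < gdist EG t ya"
          using t y yy unfolding A_def by force
        have h2: "yb \<noteq> pb \<Longrightarrow> gdist EH u pb < gdist EH u yb"
          using u y yy unfolding B_def by force
        have "ya \<noteq> pa \<or> yb \<noteq> pb" using a y yy p by blast
        then show "gdist (cart_edge EG EH) (t, u) p < gdist (cart_edge EG EH) (t, u) y"
          using e1 e2 h1 h2 by fastforce
      qed
      then show "\<exists>s\<in>T \<times> U. \<forall>y\<in>X. gdist (cart_edge EG EH) s p < gdist (cart_edge EG EH) s y"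
        using t u by blast
    qed
  qed
  have cP: "connected_graph (VG \<times> VH) (cart_edge EG EH) \<or> True" by simp
  have RP: "solid_resolving l (VG \<times> VH) (cart_edge EG EH) (VG \<times> VH)"
    using P2[OF all_resolving[OF fG cg] all_resolving[OF fH ch]] .
  obtain S0 where S0: "solid_resolving l (VG \<times> VH) (cart_edge EG EH) S0"
    "card S0 = solid_dim l (VG \<times> VH) (cart_edge EG EH)"
    using dim_witness[OF RP] by blast
  obtain T0 where T0: "solid_resolving l VG EG T0" "card T0 = solid_dim l VG EG"
    using dim_witness[OF all_resolving[OF fG cg]] by blast
  obtain U0 where U0: "solid_resolving l VH EH U0" "card U0 = solid_dim l VH EH"
    using dim_witness[OF all_resolving[OF fH ch]] by blast
  have fS0: "finite S0" using S0(1) fP unfolding solid_resolving_def using finite_subset by blast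
  have "solid_dim l VG EG \<le> card (fst ` S0)"
    using P1[OF S0(1)] dim_le by blast
  also have "\<dots> \<le> card S0" using card_image_le[OF fS0] .
  finally have L1: "solid_dim l VG EG \<le> solid_dim l (VG \<times> VH) (cart_edge EG EH)" using S0 by simp
  have "solid_dim l VH EH \<le> card (snd ` S0)"
    using P1[OF S0(1)] dim_le by blast
  also have "\<dots> \<le> card S0" using card_image_le[OF fS0] .
  finally have L2: "solid_dim l VH EH \<le> solid_dim l (VG \<times> VH) (cart_edge EG EH)" using S0 by simp
  have "solid_dim l (VG \<times> VH) (cart_edge EG EH) \<le> card (T0 \<times> U0)"
    using P2[OF T0(1) U0(1)] dim_le by blast
  also have "\<dots> = card T0 * card U0" by (simp add: card_cartesian_product)
  finally have L3: "solid_dim l (VG \<times> VH) (cart_edge EG EH) \<le> solid_dim l VG EG * solid_dim l VH EH"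
    using T0 U0 by simp
  show ?thesis using P1 P2 L1 L2 L3 by auto
qed

end
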